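(* For all integers $m\ge0$: (i) for all $n\ge0$, $r_{2n}(-q^m,q)=(q;q^2)_n\,T_m(1,-q^{2n},q)$; (ii) for all $n\ge1$, $r_{2n-1}(-q^m,q)=(q;q^2)_n\,U_{m-1}(1,-q^{2n},q)$; (iii) for all $n\ge0$, $r_n(q^{2m+1},q^2)=(-q;q)_n\,V_m(1,-q^n,-q)$.
   Context: $q$ is an indeterminate. $(x;q)_n=\prod_{j=0}^{n-1}(1-q^jx)$; the Gaussian binomial coefficient is $\begin{bmatrix} n\\ j\end{bmatrix}_q=\frac{(q;q)_n}{(q;q)_j(q;q)_{n-j}}$ for $0\le j\le n$ and $0$ otherwise; $r_n(s,q)=\sum_{j=0}^n\begin{bmatrix} n\\ j\end{bmatrix}_q s^j$. The $q$-Chebyshev polynomials are defined by recurrences in $m$: $T_0(x,s,q)=1$, $T_1(x,s,q)=x$, $T_m(x,s,q)=(1+q^{m-1})xT_{m-1}(x,s,q)+q^{m-1}sT_{m-2}(x,s,q)$ for $m\ge2$; $U_{-1}(x,s,q)=0$, $U_0(x,s,q)=1$, $U_m(x,s,q)=(1+q^m)xU_{m-1}(x,s,q)+q^{m-1}sU_{m-2}(x,s,q)$ for $m\ge1$; $V_0(x,s,q)=1$, $V_1(x,s,q)=(1+q)x+qs$, $V_m(x,s,q)=(1+q^{2m-1})xV_{m-1}(x,s,q)-q^{2m-1}s^2V_{m-2}(x,s,q)$ for $m\ge2$. In (iii), $V_m(1,-q^n,-q)$ means $V_m(x,s,p)$ evaluated at $x=1$, $s=-q^n$, $p=-q$. 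*)

theory Defs
  imports "HOL-Computational_Algebra.Polynomial"
begin

text \<open>The indeterminate q is modelled as the polynomial variable [:0,1:] over the rationals.\<close>

definition qX :: "rat poly" where "qX = [:0, 1:]"

definition qpoch :: "'a::comm_ring_1 \<Rightarrow> 'a \<Rightarrow> nat \<Rightarrow> 'a" where
  "qpoch x q n = (\<Prod>j<n. (1 - q ^ j * x))"

text \<open>Gaussian binomial coefficient (exact polynomial division).\<close>
definition gbinom :: "rat poly \<Rightarrow> nat \<Rightarrow> nat \<Rightarrow> rat poly" where
  "gbinom q n j = (if j \<le> n then qpoch q q n div (qpoch q q j * qpoch q q (n - j)) else 0)"

definition rpoly :: "nat \<Rightarrow> rat poly \<Rightarrow> rat poly \<Rightarrow> rat poly" where
  "rpoly n s q = (\<Sum>j=0..n. gbinom q n j * s ^ j)"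

fun qT :: "nat \<Rightarrow> 'a::comm_ring_1 \<Rightarrow> 'a \<Rightarrow> 'a \<Rightarrow> 'a" where
  "qT 0 x s q = 1"
| "qT (Suc 0) x s q = x"
| "qT (Suc (Suc m)) x s q =
     (1 + q ^ (Suc m)) * x * qT (Suc m) x s q + q ^ (Suc m) * s * qT m x s q"

text \<open>U_m for m \<ge> 0; U_{-1} = 0 is used for the value U_1 = (1+q)x.\<close>
fun qU :: "nat \<Rightarrow> 'a::comm_ring_1 \<Rightarrow> 'a \<Rightarrow> 'a \<Rightarrow> 'a" where
  "qU 0 x s q = 1"
| "qU (Suc 0) x s q = (1 + q) * x"
| "qU (Suc (Suc m)) x s q =
     (1 + q ^ (Suc (Suc m))) * x * qU (Suc m) x s q + q ^ (Suc m) * s * qU m x s q"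

definition qUm1 :: "nat \<Rightarrow> 'a::comm_ring_1 \<Rightarrow> 'a \<Rightarrow> 'a \<Rightarrow> 'a" where
  "qUm1 m x s q = (if m = 0 then 0 else qU (m - 1) x s q)"

fun qV :: "nat \<Rightarrow> 'a::comm_ring_1 \<Rightarrow> 'a \<Rightarrow> 'a \<Rightarrow> 'a" where
  "qV 0 x s q = 1"
| "qV (Suc 0) x s q = (1 + q) * x + q * s"
| "qV (Suc (Suc m)) x s q =
     (1 + q ^ (2 * Suc (Suc m) - 1)) * x * qV (Suc m) x s q
     - q ^ (2 * Suc (Suc m) - 1) * s ^ 2 * qV m x s q"

end

theory Submission imports Defs begin

fun gb :: "'a::comm_ring_1 \<Rightarrow> nat \<Rightarrow> nat \<Rightarrow> 'a" where
  "gb Q 0 j = (if j = 0 then 1 else 0)"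
| "gb Q (Suc n) 0 = 1"
| "gb Q (Suc n) (Suc j) = gb Q n j + Q^(Suc j) * gb Q n (Suc j)"

lemma gb_0[simp]: "gb Q n 0 = 1" by (cases n) auto

lemma gb_gt: "n < j \<Longrightarrow> gb Q n j = 0"
proof (induction n arbitrary: j)
  case 0 thus ?case by simp
next
  case (Suc n)
  then obtain j' where "j = Suc j'" by (cases j) auto
  with Suc show ?case by simp
qed

lemma qpoch_0[simp]: "qpoch x q 0 = 1" by (simp add: qpoch_def)
lemma qpoch_Suc: "qpoch x q (Suc n) = qpoch x q n * (1 - q^n * x)"
  by (simp add: qpoch_def)
lemma pp_Suc: "qpoch Q Q (Suc n) = qpoch Q Q n * (1 - Q^(Suc n))"
  by (simp add: qpoch_def mult.commute)

lemma aux1: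
  fixes a b P R u v w X :: "'a::comm_ring_1"
  assumes "a*(P*(R*(1-v))) = X" "b*(P*(1-u)*R) = X" "u*v = w"
  shows "(a + u*b)*(P*(1-u)*(R*(1-v))) = X*(1-w)"
proof -
  have "(a + u*b)*(P*(1-u)*(R*(1-v))) = (1-u)*(a*(P*(R*(1-v)))) + (u*(1-v))*(b*(P*(1-u)*R))"
    by (simp add: algebra_simps)
  also have "\<dots> = (1-u)*X + (u*(1-v))*X" using assms by simp
  also have "\<dots> = X*(1-u*v)" by (simp add: algebra_simps)
  finally show ?thesis using assms by simp
qed

lemma gb_prod: "j \<le> n \<Longrightarrow> gb Q n j * (qpoch Q Q j * qpoch Q Q (n - j)) = qpoch Q Q n"
proof (induction n arbitrary: j)
  case 0 thus ?case by simp
next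
  case (Suc n)
  show ?case
  proof (cases j)
    case 0 thus ?thesis by simp
  next
    case (Suc j')
    show ?thesis
    proof (cases "j' = n")
      case True
      have I: "gb Q n n * (qpoch Q Q n * qpoch Q Q 0) = qpoch Q Q n" using Suc.IH[of n] by simp
      show ?thesis using I True Suc by (simp add: gb_gt pp_Suc) (metis mult.assoc)
    next
      case False
      with Suc Suc.prems have lt: "j' < n" by simp
      have e: "n - j' = Suc (n - Suc j')" using lt by simp
      have ppe: "qpoch Q Q (n - j') = qpoch Q Q (n - Suc j') * (1 - Q^(Suc (n - Suc j')))"
          unfolding e by (rule pp_Suc)
      have I1: "gb Q n j' * (qpoch Q Q j' * (qpoch Q Q (n - Suc j') * (1 - Q^(Suc (n - Suc j'))))) = qpoch Q Q n"
        using Suc.IH[of j'] lt ppe by simp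
      have I2: "gb Q n (Suc j') * (qpoch Q Q j' * (1 - Q^Suc j') * qpoch Q Q (n - Suc j')) = qpoch Q Q n"
        using Suc.IH[of "Suc j'"] lt pp_Suc[of Q j'] by simp
      have uv: "Q^Suc j' * Q^(Suc (n - Suc j')) = Q^Suc n"
      proof -
        have "Suc j' + Suc (n - Suc j') = Suc n" using lt by simp
        thus ?thesis by (metis power_add)
      qed
      have "gb Q (Suc n) (Suc j') * (qpoch Q Q (Suc j') * qpoch Q Q (Suc n - Suc j'))
         = (gb Q n j' + Q^Suc j' * gb Q n (Suc j')) * (qpoch Q Q j' * (1 - Q^Suc j') * (qpoch Q Q (n - Suc j') * (1 - Q^(Suc (n - Suc j')))))"
        using lt ppe by (simp add: pp_Suc)
      also have "\<dots> = qpoch Q Q n * (1 - Q^Suc n)"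
        by (rule aux1[OF I1 I2 uv])
      finally show ?thesis using Suc by (simp add: pp_Suc)
    qed
  qed
qed


lemma gbA:
  fixes Q :: "'a::idom"
  assumes nz: "\<And>k. qpoch Q Q k \<noteq> 0"
  shows "gb Q (Suc n) (Suc j) * (1 - Q^(Suc j)) = (1 - Q^(Suc n)) * gb Q n j"
proof (cases "j \<le> n")
  case False thus ?thesis by (simp add: gb_gt)
next
  case True
  let ?M = "qpoch Q Q j * qpoch Q Q (n - j)"
  have "gb Q (Suc n) (Suc j) * (1 - Q^(Suc j)) * ?M = gb Q (Suc n) (Suc j) * (qpoch Q Q (Suc j) * qpoch Q Q (Suc n - Suc j))"
    by (simp add: pp_Suc algebra_simps)
  also have "\<dots> = qpoch Q Q (Suc n)" using True by (intro gb_prod) simp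
  also have "\<dots> = (1 - Q^(Suc n)) * gb Q n j * ?M" using gb_prod[OF True, of Q] by (simp add: pp_Suc algebra_simps)
  finally show ?thesis using nz by (simp add: mult_right_cancel del: mult_cancel_right)
qed

lemma gbB:
  fixes Q :: "'a::idom"
  assumes nz: "\<And>k. qpoch Q Q k \<noteq> 0"
  shows "gb Q n (Suc j) * (1 - Q^(Suc j)) = gb Q n j * (1 - Q^(n - j))"
proof (cases "j < n")
  case False thus ?thesis by (cases "j = n") (simp_all add: gb_gt)
next
  case True
  let ?M = "qpoch Q Q j * qpoch Q Q (n - Suc j)"
  have e: "n - j = Suc (n - Suc j)" using True by simp
  have "gb Q n (Suc j) * (1 - Q^(Suc j)) * ?M = gb Q n (Suc j) * (qpoch Q Q (Suc j) * qpoch Q Q (n - Suc j))"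
    by (simp add: pp_Suc algebra_simps)
  also have "\<dots> = qpoch Q Q n" using True by (intro gb_prod) simp
  also have "\<dots> = gb Q n j * (qpoch Q Q j * qpoch Q Q (n - j))" using True by (intro gb_prod[symmetric]) simp
  also have "\<dots> = gb Q n j * (1 - Q^(n - j)) * ?M" unfolding e pp_Suc by (simp add: algebra_simps)
  finally show ?thesis using nz by (simp add: mult_right_cancel del: mult_cancel_right)
qed

definition H :: "'a::comm_ring_1 \<Rightarrow> nat \<Rightarrow> 'a \<Rightarrow> 'a" where
  "H Q n s = (\<Sum>j\<le>n. gb Q n j * s^j)"

lemma H_ext: "n \<le> N \<Longrightarrow> H Q n s = (\<Sum>j\<le>N. gb Q n j * s^j)"
  unfolding H_def by (rule sum.mono_neutral_left) (auto simp: gb_gt)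

lemma H_Pas: "H Q (Suc n) s = s * H Q n s + H Q n (Q*s)"
proof -
  have hq0: "H Q n (Q*s) = (\<Sum>j\<le>Suc n. gb Q n j * (Q*s)^j)"
    by (rule H_ext) simp
  have hq: "H Q n (Q*s) = 1 + (\<Sum>j\<le>n. gb Q n (Suc j) * (Q*s)^(Suc j))"
    unfolding hq0 by (subst sum.atMost_Suc_shift) (simp del: power_Suc)
  have hs: "(\<Sum>j\<le>n. gb Q n j * s^(Suc j)) = s * H Q n s"
    unfolding H_def by (simp add: sum_distrib_left algebra_simps)
  have "H Q (Suc n) s = 1 + (\<Sum>j\<le>n. gb Q (Suc n) (Suc j) * s^(Suc j))"
    unfolding H_def by (subst sum.atMost_Suc_shift) (simp del: gb.simps)
  also have "\<dots> = 1 + ((\<Sum>j\<le>n. gb Q n j * s^(Suc j)) + (\<Sum>j\<le>n. gb Q n (Suc j) * (Q*s)^(Suc j)))"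
    by (simp add: sum.distrib[symmetric] algebra_simps power_mult_distrib)
  finally show ?thesis using hq hs by (simp add: algebra_simps)
qed

lemma H_D:
  fixes Q :: "'a::idom"
  assumes nz: "\<And>k. qpoch Q Q k \<noteq> 0"
  shows "H Q (Suc n) s - H Q (Suc n) (Q*s) = s * (1 - Q^Suc n) * H Q n s"
proof -
  have "H Q (Suc n) s - H Q (Suc n) (Q*s) = (\<Sum>j\<le>Suc n. gb Q (Suc n) j * (s^j - (Q*s)^j))"
    unfolding H_def by (simp only: sum_subtractf[symmetric] right_diff_distrib)
  also have "\<dots> = (\<Sum>j\<le>n. gb Q (Suc n) (Suc j) * (1 - Q^Suc j) * s^(Suc j))"
    by (subst sum.atMost_Suc_shift) (simp add: power_mult_distrib algebra_simps del: gb.simps power_Suc)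
  also have "\<dots> = (\<Sum>j\<le>n. (1 - Q^Suc n) * gb Q n j * s^(Suc j))"
    by (simp only: gbA[OF nz])
  also have "\<dots> = s * (1 - Q^Suc n) * H Q n s"
    unfolding H_def by (simp add: sum_distrib_left algebra_simps)
  finally show ?thesis .
qed


lemma H_E:
  fixes Q :: "'a::idom"
  assumes nz: "\<And>k. qpoch Q Q k \<noteq> 0"
  shows "H Q n (Q*s) - H Q n (Q*(Q*s)) = Q*s*(H Q n (Q*s) - Q^n * H Q n s)"
proof -
  have "H Q n (Q*s) - H Q n (Q*(Q*s)) = (\<Sum>j\<le>Suc n. gb Q n j * ((Q*s)^j - (Q*(Q*s))^j))"
    using H_ext[of n "Suc n" Q "Q*s"] H_ext[of n "Suc n" Q "Q*(Q*s)"]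
    by (simp only: le_Suc_eq order_refl simp_thms sum_subtractf[symmetric] right_diff_distrib)
  also have "\<dots> = (\<Sum>j\<le>n. gb Q n (Suc j) * (1 - Q^Suc j) * (Q^Suc j * s^Suc j))"
    by (subst sum.atMost_Suc_shift) (simp add: power_mult_distrib algebra_simps del: gb.simps power_Suc)
  also have "\<dots> = (\<Sum>j\<le>n. gb Q n j * (1 - Q^(n-j)) * (Q^Suc j * s^Suc j))"
    by (simp only: gbB[OF nz])
  also have "\<dots> = (\<Sum>j\<le>n. Q*s*(gb Q n j * ((Q*s)^j - Q^n * s^j)))"
  proof (rule sum.cong)
    fix j assume "j \<in> {..n}"
    hence "Q^(n-j) * Q^j = Q^n" by (simp add: power_add[symmetric])
    thus "gb Q n j * (1 - Q^(n-j)) * (Q^Suc j * s^Suc j) = Q*s*(gb Q n j * ((Q*s)^j - Q^n * s^j))"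
      by (simp add: algebra_simps power_mult_distrib)
  qed simp
  also have "\<dots> = Q*s*(H Q n (Q*s) - Q^n * H Q n s)"
    unfolding H_def sum_distrib_left sum_subtractf[symmetric] by (rule sum.cong) (simp_all add: algebra_simps)
  finally show ?thesis .
qed

lemma H_RS:
  fixes Q :: "'a::idom"
  assumes nz: "\<And>k. qpoch Q Q k \<noteq> 0"
  shows "H Q (Suc (Suc n)) s = (1+s) * H Q (Suc n) s - s * (1 - Q^Suc n) * H Q n s"
  using H_Pas[of Q "Suc n" s] H_D[OF nz, of n s] by (simp add: algebra_simps)


lemma rec3:
  fixes h0 h1 h2 g0 g1 g2 q u a :: "'a::comm_ring_1"
  assumes e1: "h1 = h0 + u*a*g0" and e2: "h2 = h1 + q*u*a*g1"
    and e3: "g1 = h0 + u*g0" and e4: "g2 = h1 + q*u*g1"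
  shows "h2 = (1+q*u)*h1 + q*u*(a-1)*h0 \<and> g2 = (1+q*u)*g1 + u*(a-1)*g0"
proof
  have f: "u*a*g0 = h1 - h0" using e1 by simp
  have "h2 = h1 + q*u*a*h0 + q*u*(u*a*g0)" using e2 e3 by (simp add: algebra_simps)
  thus "h2 = (1+q*u)*h1 + q*u*(a-1)*h0" unfolding f by (simp add: algebra_simps)
  have f2: "h0 = g1 - u*g0" using e3 by simp
  have "g2 = h0 + u*a*g0 + q*u*g1" using e4 e1 by simp
  thus "g2 = (1+q*u)*g1 + u*(a-1)*g0" unfolding f2 by (simp add: algebra_simps)
qed

lemma base1:
  fixes Q :: "'a::idom"
  assumes nz: "\<And>k. qpoch Q Q k \<noteq> 0"
  shows "H Q (2*n) (-1) = qpoch Q (Q^2) n \<and> H Q (2*n+1) (-1) = 0"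
proof (induction n)
  case 0 show ?case by (simp add: H_def)
next
  case (Suc n)
  have a: "H Q (2*Suc n) (-1) = (1 - Q^Suc (2*n)) * H Q (2*n) (-1)"
    using H_RS[OF nz, of "2*n" "-1"] by (simp add: algebra_simps)
  have b: "H Q (2*Suc n + 1) (-1) = (1 - Q^Suc (Suc (2*n))) * H Q (2*n+1) (-1)"
    using H_RS[OF nz, of "2*n+1" "-1"] by (simp add: algebra_simps)
  have c: "qpoch Q (Q^2) (Suc n) = qpoch Q (Q^2) n * (1 - Q^Suc (2*n))"
    by (simp only: qpoch_Suc power_mult[symmetric] power_Suc2[symmetric])
  show ?case using Suc a b c by (simp only: mult.commute) simp
qed

lemma qT_rec: "qT (Suc (Suc m)) 1 S Q = (1 + Q*Q^m) * qT (Suc m) 1 S Q + Q*Q^m * S * qT m 1 S Q"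
  by simp

lemma qUm1_rec: "qUm1 (Suc (Suc m)) 1 S Q = (1 + Q*Q^m) * qUm1 (Suc m) 1 S Q + Q^m * S * qUm1 m 1 S Q"
  by (cases m) (simp_all add: qUm1_def)

lemma part12:
  fixes Q :: "'a::idom"
  assumes nz: "\<And>k. qpoch Q Q k \<noteq> 0" and n: "n \<ge> 1"
  shows "H Q (2*n) (-(Q^m)) = qpoch Q (Q^2) n * qT m 1 (-(Q^(2*n))) Q
       \<and> H Q (2*n-1) (-(Q^m)) = qpoch Q (Q^2) n * qUm1 m 1 (-(Q^(2*n))) Q"
proof -
  define M where "M = 2*n - 1"
  have NM: "2*n = Suc M" using n unfolding M_def by simp
  define c where "c = qpoch Q (Q^2) n"
  define S where "S = - (Q^(2*n))"
  define h where "h m = H Q (Suc M) (-(Q^m))" for m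
  define g where "g m = H Q M (-(Q^m))" for m
  have R1: "g (Suc m) = h m + Q^m * g m" for m
    using H_Pas[of Q M "-(Q^m)"] unfolding h_def g_def by simp
  have R2: "h (Suc m) = h m + Q^m * (1 - Q^(Suc M)) * g m" for m
    using H_D[OF nz, of M "-(Q^m)"] unfolding h_def g_def by (simp add: algebra_simps)
  have M2: "M = 2*(n-1)+1" using n unfolding M_def by simp
  have h0: "h 0 = c" unfolding h_def c_def NM[symmetric] using base1[OF nz, of n] by simp
  have g0: "g 0 = 0" unfolding g_def M2 using base1[OF nz, of "n-1"] by simp
  have "h m = c * qT m 1 S Q \<and> g m = c * qUm1 m 1 S Q
      \<and> h (Suc m) = c * qT (Suc m) 1 S Q \<and> g (Suc m) = c * qUm1 (Suc m) 1 S Q"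
  proof (induction m)
    case 0 show ?case using h0 g0 R1[of 0] R2[of 0] by (simp add: qUm1_def)
  next
    case (Suc m)
    have r: "h (Suc (Suc m)) = (1+Q*Q^m)*h (Suc m) + Q*Q^m*((1 - Q^(Suc M))-1)*h m
       \<and> g (Suc (Suc m)) = (1+Q*Q^m)*g (Suc m) + Q^m*((1 - Q^(Suc M))-1)*g m"
      by (rule rec3[OF R2[of m] _ R1[of m]]) (use R2[of "Suc m"] R1[of "Suc m"] in \<open>simp_all add: algebra_simps\<close>)
    have S': "(1 - Q^(Suc M)) - 1 = S" unfolding S_def NM by simp
    from Suc.IH have i1: "h m = c * qT m 1 S Q" and i2: "g m = c * qUm1 m 1 S Q"
      and i3: "h (Suc m) = c * qT (Suc m) 1 S Q" and i4: "g (Suc m) = c * qUm1 (Suc m) 1 S Q" by auto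
    have "h (Suc (Suc m)) = (1+Q*Q^m)*(c * qT (Suc m) 1 S Q) + Q*Q^m*S*(c * qT m 1 S Q)"
      using r[unfolded S'] i1 i3 by simp
    also have "\<dots> = c * qT (Suc (Suc m)) 1 S Q" by (simp only: qT_rec) (simp add: algebra_simps)
    finally have j1: "h (Suc (Suc m)) = c * qT (Suc (Suc m)) 1 S Q" .
    have "g (Suc (Suc m)) = (1+Q*Q^m)*(c * qUm1 (Suc m) 1 S Q) + Q^m*S*(c * qUm1 m 1 S Q)"
      using r[unfolded S'] i2 i4 by simp
    also have "\<dots> = c * qUm1 (Suc (Suc m)) 1 S Q" by (simp only: qUm1_rec) (simp add: algebra_simps)
    finally have j2: "g (Suc (Suc m)) = c * qUm1 (Suc (Suc m)) 1 S Q" .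
    show ?case using i3 i4 j1 j2 by simp
  qed
  thus ?thesis unfolding h_def g_def c_def S_def NM[symmetric] by (simp add: M_def)
qed


lemma qV_rec:
  fixes q :: "'a::comm_ring_1"
  shows "qV (Suc (Suc m)) 1 (-(q^n)) (-q) = (1 - q^(2*m+3)) * qV (Suc m) 1 (-(q^n)) (-q)
           + q^(2*m+3) * q^(2*n) * qV m 1 (-(q^n)) (-q)"
proof -
  have e: "2 * Suc (Suc m) - 1 = 2*m+3" by simp
  have p: "(-q)^(2*m+3) = -(q^(2*m+3))" by (simp add: power_minus_odd)
  have s: "(-(q^n))^2 = q^(2*n)" by (simp add: power_mult[symmetric] mult.commute)
  show ?thesis by (simp only: qV.simps e p s) (simp add: algebra_simps)
qed

lemma part3_base:
  fixes q :: "'a::idom"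
  assumes nz: "\<And>k. qpoch (q^2) (q^2) k \<noteq> 0"
  shows "H (q^2) n q = qpoch (-q) q n \<and> H (q^2) (Suc n) q = qpoch (-q) q (Suc n)"
proof (induction n)
  case 0 show ?case by (simp add: H_def qpoch_def)
next
  case (Suc n)
  define a where "a = q^Suc n"
  have P1: "qpoch (-q) q (Suc n) = qpoch (-q) q n * (1 + a)" by (simp add: qpoch_Suc a_def)
  have P2: "qpoch (-q) q (Suc (Suc n)) = qpoch (-q) q n * (1 + a) * (1 + q*a)" by (simp add: qpoch_Suc a_def algebra_simps)
  have Qa: "(q^2)^Suc n = a*a" by (simp add: a_def power_mult[symmetric] power2_eq_square power_mult_distrib)
  have "H (q^2) (Suc (Suc n)) q = (1+q) * H (q^2) (Suc n) q - q * (1 - (q^2)^Suc n) * H (q^2) n q"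
    by (rule H_RS[OF nz])
  also have "\<dots> = (1+q) * (qpoch (-q) q n * (1 + a)) - q * (1 - a*a) * qpoch (-q) q n"
    using Suc.IH P1 Qa by simp
  also have "\<dots> = qpoch (-q) q (Suc (Suc n))" unfolding P2 by (simp add: algebra_simps)
  finally show ?case using Suc.IH by simp
qed

lemma part3_base1:
  fixes q :: "'a::idom"
  assumes nz: "\<And>k. qpoch (q^2) (q^2) k \<noteq> 0"
  shows "H (q^2) n (q^3) = qpoch (-q) q n * (1 - q + q * q^n)"
proof (cases n)
  case 0 thus ?thesis by (simp add: H_def)
next
  case (Suc k)
  define a where "a = q^Suc k"
  have P1: "qpoch (-q) q (Suc k) = qpoch (-q) q k * (1 + a)" by (simp add: qpoch_Suc a_def)
  have Qa: "(q^2)^Suc k = a*a" by (simp add: a_def power_mult[symmetric] power2_eq_square power_mult_distrib)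
  have q3: "q^2 * q = q^3" by (simp add: power_Suc2[symmetric] numeral_3_eq_3)
  have "H (q^2) (Suc k) (q^2*q) = H (q^2) (Suc k) q - q * (1 - (q^2)^Suc k) * H (q^2) k q"
    using H_D[OF nz, of k q] by (simp add: algebra_simps)
  also have "\<dots> = qpoch (-q) q k * (1 + a) - q * (1 - a*a) * qpoch (-q) q k"
    using part3_base[OF nz, of k] P1 Qa by simp
  also have "\<dots> = qpoch (-q) q k * (1 + a) * (1 - q + q * a)" by (simp add: algebra_simps)
  finally show ?thesis using Suc P1 q3 by (simp add: a_def)
qed

lemma part3:
  fixes q :: "'a::idom"
  assumes nz: "\<And>k. qpoch (q^2) (q^2) k \<noteq> 0"
  shows "H (q^2) n (q^(2*m+1)) = qpoch (-q) q n * qV m 1 (-(q^n)) (-q)"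
proof -
  define P where "P = qpoch (-q) q n"
  define k where "k m = H (q^2) n (q^(2*m+1))" for m
  have rec: "k (Suc (Suc m)) = (1 - q^(2*m+3)) * k (Suc m) + q^(2*m+3) * q^(2*n) * k m" for m
  proof -
    have e1: "q^2 * q^(2*m+1) = q^(2*Suc m+1)" by (simp add: power_add[symmetric])
    have e2: "q^2 * q^(2*Suc m+1) = q^(2*Suc (Suc m)+1)" by (simp add: power_add[symmetric])
    have e3: "q^2 * q^(2*m+1) = q^(2*m+3)"
    proof -
      have "2 + (2*m+1) = 2*m+3" by simp
      thus ?thesis by (metis power_add)
    qed
    have E: "k (Suc m) - k (Suc (Suc m)) = q^(2*m+3) * (k (Suc m) - q^(2*n) * k m)"
      using H_E[OF nz, of n "q^(2*m+1)"] unfolding k_def e1 e2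
      by (simp only: e1[symmetric] e3[symmetric] power_mult[symmetric] mult.commute[of 2 n]) 
    thus ?thesis by (simp add: algebra_simps)
  qed
  have k0: "k 0 = P * qV 0 1 (-(q^n)) (-q)" using part3_base[OF nz, of n] unfolding k_def P_def by simp
  have t: "2*(1::nat)+1 = 3" by simp
  have "k 1 = H (q^2) n (q^3)" unfolding k_def t ..
  also have "\<dots> = P * (1 - q + q * q^n)" unfolding P_def by (rule part3_base1[OF nz])
  also have "\<dots> = P * qV 1 1 (-(q^n)) (-q)" by (simp add: algebra_simps)
  finally have k1: "k 1 = P * qV 1 1 (-(q^n)) (-q)" .
  have "k m = P * qV m 1 (-(q^n)) (-q) \<and> k (Suc m) = P * qV (Suc m) 1 (-(q^n)) (-q)"
  proof (induction m)
    case 0 show ?case using k0 k1 by simp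
  next
    case (Suc m)
    have "k (Suc (Suc m)) = P * qV (Suc (Suc m)) 1 (-(q^n)) (-q)"
      unfolding rec qV_rec using Suc.IH by (simp add: algebra_simps)
    thus ?case using Suc.IH by simp
  qed
  thus ?thesis unfolding k_def P_def by simp
qed


lemma qX_pow_ne1: "0 < k \<Longrightarrow> qX ^ k \<noteq> 1"
proof
  assume k: "0 < k" and e: "qX ^ k = 1"
  have "degree (qX ^ k) = k * degree qX" by (rule degree_power_eq) (simp add: qX_def)
  also have "degree qX = 1" by (simp add: qX_def)
  finally show False using e k by simp
qed

lemma nz_qX: assumes e: "0 < e" shows "qpoch (qX^e) (qX^e) k \<noteq> 0"
proof -
  have "\<forall>j\<in>{..<k}. 1 - (qX^e)^j * qX^e \<noteq> 0"
  proof
    fix j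
    have "(qX^e)^j * qX^e = qX^(e*j+e)" by (simp add: power_mult power_add)
    moreover have "qX^(e*j+e) \<noteq> 1" using e by (intro qX_pow_ne1) simp
    ultimately show "1 - (qX^e)^j * qX^e \<noteq> 0" by simp
  qed
  thus ?thesis unfolding qpoch_def by (simp add: prod_zero_iff)
qed

lemma rpoly_H:
  assumes nz: "\<And>k. qpoch Q Q k \<noteq> 0"
  shows "rpoly n s Q = H Q n s"
  unfolding rpoly_def H_def atLeast0AtMost
proof (rule sum.cong[OF refl])
  fix j assume "j \<in> {..n}"
  hence j: "j \<le> n" by simp
  have "gbinom Q n j = (gb Q n j * (qpoch Q Q j * qpoch Q Q (n - j))) div (qpoch Q Q j * qpoch Q Q (n - j))"
    unfolding gbinom_def using j gb_prod[OF j, of Q] by simp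
  also have "\<dots> = gb Q n j" using nz by simp
  finally show "gbinom Q n j * s^j = gb Q n j * s^j" by simp
qed

lemma qT_one: "qT m 1 (-1) Q = 1 \<and> qT (Suc m) 1 (-1) Q = 1"
  by (induction m) simp_all

theorem corollary2p2:
  fixes m :: nat
  shows "(\<forall>n::nat. rpoly (2 * n) (- (qX ^ m)) qX
            = qpoch qX (qX ^ 2) n * qT m 1 (- (qX ^ (2 * n))) qX)
       \<and> (\<forall>n::nat. n \<ge> 1 \<longrightarrow> rpoly (2 * n - 1) (- (qX ^ m)) qX
            = qpoch qX (qX ^ 2) n * qUm1 m 1 (- (qX ^ (2 * n))) qX)
       \<and> (\<forall>n::nat. rpoly n (qX ^ (2 * m + 1)) (qX ^ 2)
            = qpoch (- qX) qX n * qV m 1 (- (qX ^ n)) (- qX))"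
proof (intro conjI allI impI)
  have nz1: "\<And>k. qpoch qX qX k \<noteq> 0" using nz_qX[of 1] by simp
  have nz2: "\<And>k. qpoch (qX^2) (qX^2) k \<noteq> 0" using nz_qX[of 2] by simp
  fix n :: nat
  show "rpoly (2 * n) (- (qX ^ m)) qX = qpoch qX (qX ^ 2) n * qT m 1 (- (qX ^ (2 * n))) qX"
  proof (cases "n = 0")
    case True thus ?thesis using qT_one[of m qX] by (simp add: rpoly_H[OF nz1] H_def)
  next
    case False thus ?thesis using part12[OF nz1, of n m] by (simp add: rpoly_H[OF nz1])
  qed
  show "rpoly n (qX ^ (2 * m + 1)) (qX ^ 2) = qpoch (- qX) qX n * qV m 1 (- (qX ^ n)) (- qX)"
    using part3[OF nz2, of n m] by (simp add: rpoly_H[OF nz2])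
  assume "n \<ge> 1"
  thus "rpoly (2 * n - 1) (- (qX ^ m)) qX = qpoch qX (qX ^ 2) n * qUm1 m 1 (- (qX ^ (2 * n))) qX"
    using part12[OF nz1, of n m] by (simp add: rpoly_H[OF nz1])
qed

end
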